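(* Let $\beta>2\alpha>0$ and let $\varphi_N:\mathbb{R}^{s_N}\to\mathbb{R}$ be $\varphi_N(x)=\frac12x^TAx-\sum_{k=1}^{s_N}\log\cosh(x^TAe_k)$. The Hessian matrix of $\varphi_N$ at $x=(0,\dots,0)$ is positive definite if $\beta+2\alpha<1$, positive semi-definite if $\beta+2\alpha=1$, and not positive (semi-)definite if $\beta+2\alpha>1$.
   Context: $A$ is the $s_N\times s_N$ symmetric circulant matrix $A=\beta I+\alpha(P+P^T)$, where $P$ is the cyclic shift matrix (so $A_{kk}=\beta$, $A_{k,k\pm1}=\alpha$ with indices mod $s_N$); $e_k$ are the standard basis vectors of $\mathbb{R}^{s_N}$. *)

theory Defs
  imports "HOL-Analysis.Analysis"
begin

text \<open>Vectors of R^n are represented as functions nat => real, only indices < n matter;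
  n x n matrices as nat => nat => real, only indices < n matter.\<close>

text \<open>A = beta I + alpha (P + P^T), P the cyclic shift (P i j = 1 iff j = i+1 mod n).\<close>
definition circA :: "nat \<Rightarrow> real \<Rightarrow> real \<Rightarrow> nat \<Rightarrow> nat \<Rightarrow> real" where
  "circA n \<alpha> \<beta> i j =
     (if i = j then \<beta> else 0)
   + (if j = Suc i mod n then \<alpha> else 0)
   + (if i = Suc j mod n then \<alpha> else 0)"

definition quad_form :: "nat \<Rightarrow> (nat \<Rightarrow> nat \<Rightarrow> real) \<Rightarrow> (nat \<Rightarrow> real) \<Rightarrow> real" where
  "quad_form n M x = (\<Sum>i<n. \<Sum>j<n. x i * M i j * x j)"

definition phiN :: "nat \<Rightarrow> real \<Rightarrow> real \<Rightarrow> (nat \<Rightarrow> real) \<Rightarrow> real" where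
  "phiN n \<alpha> \<beta> x = 1/2 * quad_form n (circA n \<alpha> \<beta>) x
      - (\<Sum>k<n. ln (cosh (\<Sum>i<n. x i * circA n \<alpha> \<beta> i k)))"

definition partial :: "((nat \<Rightarrow> real) \<Rightarrow> real) \<Rightarrow> nat \<Rightarrow> (nat \<Rightarrow> real) \<Rightarrow> real" where
  "partial f i x = deriv (\<lambda>t. f (x(i := x i + t))) 0"

definition hessian :: "((nat \<Rightarrow> real) \<Rightarrow> real) \<Rightarrow> (nat \<Rightarrow> real) \<Rightarrow> nat \<Rightarrow> nat \<Rightarrow> real" where
  "hessian f x i j = partial (\<lambda>y. partial f j y) i x"

definition pos_def :: "nat \<Rightarrow> (nat \<Rightarrow> nat \<Rightarrow> real) \<Rightarrow> bool" where
  "pos_def n M \<longleftrightarrow> (\<forall>v. (\<exists>i<n. v i \<noteq> 0) \<longrightarrow> quad_form n M v > 0)"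

definition pos_semidef :: "nat \<Rightarrow> (nat \<Rightarrow> nat \<Rightarrow> real) \<Rightarrow> bool" where
  "pos_semidef n M \<longleftrightarrow> (\<forall>v. quad_form n M v \<ge> 0)"

end

theory Submission
  imports Defs
begin

lemma upd_lin:
  fixes y c :: "nat \<Rightarrow> real"
  assumes "j < n"
  shows "(\<Sum>i<n. (y(j := y j + t)) i * c i) = (\<Sum>i<n. y i * c i) + t * c j"
proof -
  have "(\<Sum>i<n. (y(j := y j + t)) i * c i) = (\<Sum>i<n. y i * c i + (if i = j then t * c j else 0))"
    by (rule sum.cong) (auto simp: algebra_simps)
  also have "\<dots> = (\<Sum>i<n. y i * c i) + t * c j"
    using assms by (simp add: sum.distrib)
  finally show ?thesis .
qed

lemma quad_upd:
  fixes y :: "nat \<Rightarrow> real"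
  assumes "j < n"
  shows "quad_form n M (y(j := y j + t)) =
     quad_form n M y + t * ((\<Sum>l<n. M j l * y l) + (\<Sum>i<n. y i * M i j)) + t^2 * M j j"
proof -
  let ?x = "y(j := y j + t)"
  have "quad_form n M ?x = (\<Sum>i<n. ?x i * (\<Sum>l<n. ?x l * M i l))"
    unfolding quad_form_def by (simp add: sum_distrib_left algebra_simps)
  also have "\<dots> = (\<Sum>i<n. ?x i * ((\<Sum>l<n. y l * M i l) + t * M i j))"
    using upd_lin[OF assms, of y t] by simp
  also have "\<dots> = (\<Sum>i<n. y i * ((\<Sum>l<n. y l * M i l) + t * M i j)) + t * ((\<Sum>l<n. y l * M j l) + t * M j j)"
    by (rule upd_lin[OF assms])
  also have "\<dots> = quad_form n M y + t * ((\<Sum>l<n. M j l * y l) + (\<Sum>i<n. y i * M i j)) + t^2 * M j j"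
    unfolding quad_form_def
    by (simp add: algebra_simps sum.distrib sum_distrib_left sum_distrib_right power2_eq_square)
  finally show ?thesis .
qed

lemma partial_phi:
  assumes "j < n"
  shows "partial (phiN n \<alpha> \<beta>) j y =
     (1/2) * ((\<Sum>l<n. circA n \<alpha> \<beta> j l * y l) + (\<Sum>i<n. y i * circA n \<alpha> \<beta> i j))
     - (\<Sum>k<n. tanh (\<Sum>i<n. y i * circA n \<alpha> \<beta> i k) * circA n \<alpha> \<beta> j k)"
proof -
  let ?A = "circA n \<alpha> \<beta>"
  define u where "u k = (\<Sum>i<n. y i * ?A i k)" for k
  have eq: "(\<lambda>t. phiN n \<alpha> \<beta> (y(j := y j + t))) = (\<lambda>t. 1/2 * (quad_form n ?A y
     + t * ((\<Sum>l<n. ?A j l * y l) + (\<Sum>i<n. y i * ?A i j)) + t^2 * ?A j j)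
     - (\<Sum>k<n. ln (cosh (u k + t * ?A j k))))"
  proof -
    have h: "\<And>k t. (\<Sum>i<n. (y(j := y j + t)) i * ?A i k) = u k + t * ?A j k"
      unfolding u_def by (rule upd_lin[OF assms])
    show ?thesis by (simp only: phiN_def quad_upd[OF assms] h)
  qed
  have cpos: "\<And>x::real. cosh x > 0" by (simp add: cosh_real_pos)
  have "((\<lambda>t. 1/2 * (quad_form n ?A y
     + t * ((\<Sum>l<n. ?A j l * y l) + (\<Sum>i<n. y i * ?A i j)) + t^2 * ?A j j)
     - (\<Sum>k<n. ln (cosh (u k + t * ?A j k)))) has_real_derivative
     (1/2) * ((\<Sum>l<n. ?A j l * y l) + (\<Sum>i<n. y i * ?A i j))
     - (\<Sum>k<n. tanh (u k) * ?A j k)) (at 0)"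
    by (auto intro!: derivative_eq_intros simp: cpos tanh_def)
  then show ?thesis unfolding partial_def eq u_def by (rule DERIV_imp_deriv)
qed

lemma circA_sym: "circA n \<alpha> \<beta> i j = circA n \<alpha> \<beta> j i"
  unfolding circA_def by auto

lemma hess_phi:
  assumes "i < n" "j < n"
  shows "hessian (phiN n \<alpha> \<beta>) (\<lambda>_. 0) i j =
     circA n \<alpha> \<beta> i j - (\<Sum>k<n. circA n \<alpha> \<beta> i k * circA n \<alpha> \<beta> j k)"
proof -
  let ?A = "circA n \<alpha> \<beta>"
  let ?z = "\<lambda>_. 0::real"
  have h1: "\<And>c s. (\<Sum>l<n. (?z(i := ?z i + s)) l * c l) = s * c i"
    using upd_lin[OF assms(1), of ?z] by simp
  have h2: "\<And>c s. (\<Sum>l<n. c l * (?z(i := ?z i + s)) l) = s * c i"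
    using h1 by (simp add: mult.commute)
  have eq: "(\<lambda>s. partial (phiN n \<alpha> \<beta>) j (?z(i := ?z i + s))) =
     (\<lambda>s. 1/2 * (s * ?A j i + s * ?A i j) - (\<Sum>k<n. tanh (s * ?A i k) * ?A j k))"
    by (simp only: partial_phi[OF assms(2)] h1 h2)
  have cpos: "\<And>x::real. cosh x \<noteq> 0" using cosh_real_pos by (metis less_irrefl)
  have "((\<lambda>s. 1/2 * (s * ?A j i + s * ?A i j) - (\<Sum>k<n. tanh (s * ?A i k) * ?A j k))
     has_real_derivative (1/2 * (?A j i + ?A i j) - (\<Sum>k<n. (1 - tanh (0 * ?A i k) ^ 2) * ?A i k * ?A j k))) (at 0)"
    by (auto intro!: derivative_eq_intros simp: cpos)
  then have "hessian (phiN n \<alpha> \<beta>) ?z i j = 1/2 * (?A j i + ?A i j) - (\<Sum>k<n. (1 - tanh (0 * ?A i k) ^ 2) * ?A i k * ?A j k)"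
  proof -
    have "hessian (phiN n \<alpha> \<beta>) ?z i j = deriv (\<lambda>s. partial (phiN n \<alpha> \<beta>) j (?z(i := ?z i + s))) 0"
      unfolding hessian_def partial_def[of "partial (phiN n \<alpha> \<beta>) j"] by simp
    then show ?thesis unfolding eq using DERIV_imp_deriv[OF \<open>(_ has_real_derivative _) _\<close>] by simp
  qed
  then show ?thesis by (simp add: circA_sym[of n \<alpha> \<beta> j i])
qed

lemma sig_tau:
  assumes "1 \<le> n" "i < n" "k < n"
  shows "(k = Suc i mod n) \<longleftrightarrow> (i = (k + n - 1) mod n)"
proof (cases "Suc i = n")
  case True
  show ?thesis
  proof (cases k)
    case 0
    then show ?thesis using assms True by auto
  next
    case (Suc k')
    then have "(k + n - 1) mod n = k'" using assms by (simp add: mod_if)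
    then show ?thesis using True Suc assms by auto
  qed
next
  case False
  then have s: "Suc i mod n = Suc i" using assms by simp
  show ?thesis
  proof (cases k)
    case 0
    then show ?thesis using assms False s by auto
  next
    case (Suc k')
    then have "(k + n - 1) mod n = k'" using assms by (simp add: mod_if)
    then show ?thesis using s Suc by auto
  qed
qed

lemma bij_sig:
  assumes "1 \<le> n"
  shows "bij_betw (\<lambda>k. Suc k mod n) {..<n} {..<n}"
proof (rule bij_betw_byWitness[where f' = "\<lambda>k. (k + n - 1) mod n"])
  show "\<forall>a\<in>{..<n}. (Suc a mod n + n - 1) mod n = a"
    using sig_tau[OF assms] assms by (metis lessThan_iff mod_less_divisor less_le_trans zero_less_one)
  show "\<forall>a\<in>{..<n}. Suc ((a + n - 1) mod n) mod n = a"
    using sig_tau[OF assms] assms by (metis lessThan_iff mod_less_divisor less_le_trans zero_less_one)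
  show "(\<lambda>k. Suc k mod n) ` {..<n} \<subseteq> {..<n}" using assms by auto
  show "(\<lambda>k. (k + n - 1) mod n) ` {..<n} \<subseteq> {..<n}" using assms by auto
qed

lemma Av_formula:
  assumes "1 \<le> n" "k < n"
  shows "(\<Sum>i<n. v i * circA n \<alpha> \<beta> i k) = \<beta> * v k + \<alpha> * v ((k + n - 1) mod n) + \<alpha> * v (Suc k mod n)"
proof -
  have "(\<Sum>i<n. v i * circA n \<alpha> \<beta> i k) = (\<Sum>i<n. (if i = k then \<beta> * v k else 0)
     + (if i = (k + n - 1) mod n then \<alpha> * v ((k + n - 1) mod n) else 0)
     + (if i = Suc k mod n then \<alpha> * v (Suc k mod n) else 0))"
    by (rule sum.cong) (auto simp: circA_def sig_tau[OF assms(1) _ assms(2)] algebra_simps)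
  also have "\<dots> = \<beta> * v k + \<alpha> * v ((k + n - 1) mod n) + \<alpha> * v (Suc k mod n)"
    using assms by (simp add: sum.distrib)
  finally show ?thesis .
qed

lemma quadH:
  assumes "1 \<le> n"
  shows "quad_form n (hessian (phiN n \<alpha> \<beta>) (\<lambda>_. 0)) v =
    (\<Sum>k<n. v k * (\<Sum>i<n. v i * circA n \<alpha> \<beta> i k)) - (\<Sum>k<n. (\<Sum>i<n. v i * circA n \<alpha> \<beta> i k)^2)"
proof -
  let ?A = "circA n \<alpha> \<beta>"
  have "quad_form n (hessian (phiN n \<alpha> \<beta>) (\<lambda>_. 0)) v =
     (\<Sum>i<n. \<Sum>j<n. v i * ?A i j * v j) - (\<Sum>i<n. \<Sum>j<n. \<Sum>k<n. v i * ?A i k * (v j * ?A j k))"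
    unfolding quad_form_def
    by (simp add: hess_phi sum_subtractf[symmetric] sum_distrib_left sum_distrib_right algebra_simps)
  also have "(\<Sum>i<n. \<Sum>j<n. v i * ?A i j * v j) = (\<Sum>k<n. v k * (\<Sum>i<n. v i * ?A i k))"
    by (subst sum.swap) (simp add: sum_distrib_left algebra_simps)
  also have "(\<Sum>i<n. \<Sum>j<n. \<Sum>k<n. v i * ?A i k * (v j * ?A j k)) = (\<Sum>k<n. (\<Sum>i<n. v i * ?A i k)^2)"
  proof -
    have "(\<Sum>k<n. (\<Sum>i<n. v i * ?A i k)^2) = (\<Sum>k<n. \<Sum>i<n. \<Sum>j<n. v i * ?A i k * (v j * ?A j k))"
      by (simp add: power2_eq_square sum_product)
    also have "\<dots> = (\<Sum>i<n. \<Sum>k<n. \<Sum>j<n. v i * ?A i k * (v j * ?A j k))"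
      by (rule sum.swap)
    also have "\<dots> = (\<Sum>i<n. \<Sum>j<n. \<Sum>k<n. v i * ?A i k * (v j * ?A j k))"
      by (rule sum.cong[OF refl], rule sum.swap)
    finally show ?thesis by simp
  qed
  finally show ?thesis .
qed

lemma Q_bound:
  fixes v :: "nat \<Rightarrow> real"
  assumes n: "1 \<le> n" and a0: "0 < \<alpha>"
  defines "V \<equiv> (\<Sum>k<n. (v k)^2)"
  obtains X Y where "\<bar>X\<bar> \<le> V" "Y \<le> V"
    "quad_form n (hessian (phiN n \<alpha> \<beta>) (\<lambda>_. 0)) v =
       \<beta> * V + 2 * \<alpha> * X - (\<beta>^2 * V + 2 * \<alpha>^2 * V + 4 * \<alpha> * \<beta> * X + 2 * \<alpha>^2 * Y)"
proof -
  define \<sigma> where "\<sigma> k = Suc k mod n" for k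
  define \<tau> where "\<tau> k = (k + n - 1) mod n" for k
  define a where "a k = v (\<tau> k)" for k
  define b where "b k = v (\<sigma> k)" for k
  define X where "X = (\<Sum>k<n. v k * b k)"
  define Y where "Y = (\<Sum>k<n. a k * b k)"
  have sq1: "\<And>x y::real. 2 * (x * y) \<le> x^2 + y^2"
    using sum_squares_bound by (simp add: mult.assoc)
  have sq2: "\<And>x y::real. - (2 * (x * y)) \<le> x^2 + y^2"
  proof -
    fix x y :: real
    show "- (2 * (x * y)) \<le> x^2 + y^2" using sum_squares_bound[of x "-y"] by simp
  qed
  have bij: "bij_betw \<sigma> {..<n} {..<n}" unfolding \<sigma>_def by (rule bij_sig[OF n])
  have ts: "\<And>k. k < n \<Longrightarrow> \<tau> (\<sigma> k) = k"
    unfolding \<sigma>_def \<tau>_def using sig_tau[OF n] n by (metis mod_less_divisor less_le_trans zero_less_one)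
  have re: "\<And>g. (\<Sum>k<n. g (\<sigma> k)) = (\<Sum>k<n. g k)"
    by (rule sum.reindex_bij_betw[OF bij])
  have va: "(\<Sum>k<n. v k * a k) = X"
  proof -
    have "(\<Sum>k<n. v k * a k) = (\<Sum>k<n. v (\<sigma> k) * a (\<sigma> k))" by (rule re[symmetric])
    also have "\<dots> = X" unfolding X_def a_def b_def by (rule sum.cong) (auto simp: ts mult.commute)
    finally show ?thesis .
  qed
  have aa: "(\<Sum>k<n. (a k)^2) = V"
  proof -
    have "(\<Sum>k<n. (a k)^2) = (\<Sum>k<n. (a (\<sigma> k))^2)" by (rule re[symmetric])
    also have "\<dots> = V" unfolding V_def a_def by (rule sum.cong) (auto simp: ts)
    finally show ?thesis .
  qed
  have bb: "(\<Sum>k<n. (b k)^2) = V" unfolding V_def b_def using re[of "\<lambda>k. (v k)^2"] by simp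
  have "2 * Y \<le> (\<Sum>k<n. (a k)^2) + (\<Sum>k<n. (b k)^2)"
    unfolding Y_def sum_distrib_left sum.distrib[symmetric]
    by (rule sum_mono) (simp add: sq1 sq2)
  then have Y: "Y \<le> V" using aa bb by simp
  have "2 * X \<le> V + (\<Sum>k<n. (b k)^2)"
    unfolding X_def V_def sum_distrib_left sum.distrib[symmetric]
    by (rule sum_mono) (simp add: sq1 sq2)
  moreover have "- 2 * X \<le> V + (\<Sum>k<n. (b k)^2)"
    unfolding X_def V_def sum_distrib_left sum.distrib[symmetric] sum_negf[symmetric] mult_minus_left
    by (rule sum_mono) (simp add: sq1 sq2)
  ultimately have X: "\<bar>X\<bar> \<le> V" using bb by linarith
  have Av: "\<And>k. k < n \<Longrightarrow> (\<Sum>i<n. v i * circA n \<alpha> \<beta> i k) = \<beta> * v k + \<alpha> * a k + \<alpha> * b k"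
    unfolding a_def b_def \<sigma>_def \<tau>_def by (rule Av_formula[OF n])
  have "quad_form n (hessian (phiN n \<alpha> \<beta>) (\<lambda>_. 0)) v =
     (\<Sum>k<n. v k * (\<beta> * v k + \<alpha> * a k + \<alpha> * b k)) - (\<Sum>k<n. (\<beta> * v k + \<alpha> * a k + \<alpha> * b k)^2)"
    unfolding quadH[OF n] by (simp add: Av)
  also have "\<dots> = \<beta> * V + \<alpha> * (\<Sum>k<n. v k * a k) + \<alpha> * X
     - (\<beta>^2 * V + \<alpha>^2 * (\<Sum>k<n. (a k)^2) + \<alpha>^2 * (\<Sum>k<n. (b k)^2)
        + 2 * \<alpha> * \<beta> * (\<Sum>k<n. v k * a k) + 2 * \<alpha> * \<beta> * X + 2 * \<alpha>^2 * Y)"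
  proof -
    have pw: "\<And>k. v k * (\<beta> * v k + \<alpha> * a k + \<alpha> * b k) - (\<beta> * v k + \<alpha> * a k + \<alpha> * b k)^2 =
      \<beta> * (v k)^2 + \<alpha> * (v k * a k) + \<alpha> * (v k * b k) - (\<beta>^2 * (v k)^2 + \<alpha>^2 * (a k)^2 + \<alpha>^2 * (b k)^2
        + 2 * \<alpha> * \<beta> * (v k * a k) + 2 * \<alpha> * \<beta> * (v k * b k) + 2 * \<alpha>^2 * (a k * b k))"
      by (simp add: power2_eq_square algebra_simps)
    show ?thesis
      unfolding sum_subtractf[symmetric] pw V_def X_def Y_def
      by (simp add: sum.distrib sum_subtractf sum_distrib_left)
  qed
  also have "\<dots> = \<beta> * V + 2 * \<alpha> * X - (\<beta>^2 * V + 2 * \<alpha>^2 * V + 4 * \<alpha> * \<beta> * X + 2 * \<alpha>^2 * Y)"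
    unfolding va aa bb by (simp add: algebra_simps)
  finally show ?thesis using that X Y by blast
qed

lemma Q_lower:
  fixes V X Y \<alpha> \<beta> :: real
  assumes "0 < \<alpha>" "\<bar>X\<bar> \<le> V" "Y \<le> V"
  shows "\<beta> * V + 2 * \<alpha> * X - (\<beta>^2 * V + 2 * \<alpha>^2 * V + 4 * \<alpha> * \<beta> * X + 2 * \<alpha>^2 * Y)
     \<ge> min ((\<beta> - 2*\<alpha>) * (1 - \<beta> + 2*\<alpha>)) ((\<beta> + 2*\<alpha>) * (1 - \<beta> - 2*\<alpha>)) * V"
proof -
  have eq: "\<beta> * V + 2 * \<alpha> * X - (\<beta>^2 * V + 2 * \<alpha>^2 * V + 4 * \<alpha> * \<beta> * X + 2 * \<alpha>^2 * Y)
     = (\<beta> - \<beta>^2 - 4*\<alpha>^2) * V + (2 * \<alpha> * (1 - 2*\<beta>)) * X + 2 * \<alpha>^2 * (V - Y)"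
    by (simp add: algebra_simps power2_eq_square)
  have y: "2 * \<alpha>^2 * (V - Y) \<ge> 0" using assms by simp
  have V0: "V \<ge> 0" using assms by linarith
  show ?thesis
  proof (cases "1 - 2*\<beta> \<ge> 0")
    case True
    have "(2 * \<alpha> * (1 - 2*\<beta>)) * X \<ge> (2 * \<alpha> * (1 - 2*\<beta>)) * (-V)"
      using True assms by (intro mult_left_mono) auto
    moreover have "(\<beta> - \<beta>^2 - 4*\<alpha>^2) * V + (2 * \<alpha> * (1 - 2*\<beta>)) * (-V) = ((\<beta> - 2*\<alpha>) * (1 - \<beta> + 2*\<alpha>)) * V"
      by (simp add: algebra_simps power2_eq_square)
    moreover have "min ((\<beta> - 2*\<alpha>) * (1 - \<beta> + 2*\<alpha>)) ((\<beta> + 2*\<alpha>) * (1 - \<beta> - 2*\<alpha>)) * V \<le> ((\<beta> - 2*\<alpha>) * (1 - \<beta> + 2*\<alpha>)) * V"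
      using V0 by (intro mult_right_mono) auto
    ultimately show ?thesis unfolding eq using y by linarith
  next
    case False
    have "(2 * \<alpha> * (1 - 2*\<beta>)) * X \<ge> (2 * \<alpha> * (1 - 2*\<beta>)) * V"
      proof -
      have "2 * \<alpha> * (1 - 2*\<beta>) \<le> 0" using False assms by (intro mult_nonneg_nonpos) auto
      then show ?thesis using assms by (intro mult_left_mono_neg) auto
    qed
    moreover have "(\<beta> - \<beta>^2 - 4*\<alpha>^2) * V + (2 * \<alpha> * (1 - 2*\<beta>)) * V = ((\<beta> + 2*\<alpha>) * (1 - \<beta> - 2*\<alpha>)) * V"
      by (simp add: algebra_simps power2_eq_square)
    moreover have "min ((\<beta> - 2*\<alpha>) * (1 - \<beta> + 2*\<alpha>)) ((\<beta> + 2*\<alpha>) * (1 - \<beta> - 2*\<alpha>)) * V \<le> ((\<beta> + 2*\<alpha>) * (1 - \<beta> - 2*\<alpha>)) * V"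
      using V0 by (intro mult_right_mono) auto
    ultimately show ?thesis unfolding eq using y by linarith
  qed
qed

theorem lemma4p2:
  fixes n :: nat and \<alpha> \<beta> :: real
  assumes "n \<ge> 1" and "0 < 2 * \<alpha>" and "2 * \<alpha> < \<beta>"
  shows "(\<beta> + 2 * \<alpha> < 1 \<longrightarrow> pos_def n (hessian (phiN n \<alpha> \<beta>) (\<lambda>_. 0)))
       \<and> (\<beta> + 2 * \<alpha> = 1 \<longrightarrow> pos_semidef n (hessian (phiN n \<alpha> \<beta>) (\<lambda>_. 0)))
       \<and> (\<beta> + 2 * \<alpha> > 1 \<longrightarrow> \<not> pos_def n (hessian (phiN n \<alpha> \<beta>) (\<lambda>_. 0))
                              \<and> \<not> pos_semidef n (hessian (phiN n \<alpha> \<beta>) (\<lambda>_. 0)))"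
proof -
  let ?H = "hessian (phiN n \<alpha> \<beta>) (\<lambda>_. 0)"
  have a0: "0 < \<alpha>" using assms by simp
  have low: "quad_form n ?H v \<ge> min ((\<beta> - 2*\<alpha>) * (1 - \<beta> + 2*\<alpha>)) ((\<beta> + 2*\<alpha>) * (1 - \<beta> - 2*\<alpha>)) * (\<Sum>k<n. (v k)^2)" for v
  proof -
    obtain X Y where "\<bar>X\<bar> \<le> (\<Sum>k<n. (v k)^2)" "Y \<le> (\<Sum>k<n. (v k)^2)"
      "quad_form n ?H v = \<beta> * (\<Sum>k<n. (v k)^2) + 2 * \<alpha> * X - (\<beta>^2 * (\<Sum>k<n. (v k)^2) + 2 * \<alpha>^2 * (\<Sum>k<n. (v k)^2) + 4 * \<alpha> * \<beta> * X + 2 * \<alpha>^2 * Y)"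
      using Q_bound[OF assms(1) a0, of v \<beta>] by blast
    then show ?thesis using Q_lower[OF a0] by simp
  qed
  have p1: "(\<beta> - 2*\<alpha>) * (1 - \<beta> + 2*\<alpha>) > 0" if "\<beta> + 2 * \<alpha> \<le> 1" using assms that by (intro mult_pos_pos) auto
  have V0: "(\<Sum>k<n. (v k)^2) \<ge> 0" for v :: "nat \<Rightarrow> real" by (intro sum_nonneg) auto
  have part1: "pos_def n ?H" if lt: "\<beta> + 2 * \<alpha> < 1"
    unfolding pos_def_def
  proof (intro allI impI)
    fix v :: "nat \<Rightarrow> real"
    assume "\<exists>i<n. v i \<noteq> 0"
    then obtain i where i: "i < n" "v i \<noteq> 0" by blast
    have "(v i)^2 \<le> (\<Sum>k<n. (v k)^2)"
      using i by (intro member_le_sum) auto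
    moreover have "(v i)^2 > 0" using i by simp
    ultimately have Vp: "(\<Sum>k<n. (v k)^2) > 0" by linarith
    have p2: "(\<beta> + 2*\<alpha>) * (1 - \<beta> - 2*\<alpha>) > 0" using assms lt by (intro mult_pos_pos) auto
    have "min ((\<beta> - 2*\<alpha>) * (1 - \<beta> + 2*\<alpha>)) ((\<beta> + 2*\<alpha>) * (1 - \<beta> - 2*\<alpha>)) > 0"
      using p1 p2 lt by simp
    then have "min ((\<beta> - 2*\<alpha>) * (1 - \<beta> + 2*\<alpha>)) ((\<beta> + 2*\<alpha>) * (1 - \<beta> - 2*\<alpha>)) * (\<Sum>k<n. (v k)^2) > 0"
      using Vp by (rule mult_pos_pos)
    then show "quad_form n ?H v > 0" using low[of v] by linarith
  qed
  have part2: "pos_semidef n ?H" if eq: "\<beta> + 2 * \<alpha> = 1"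
    unfolding pos_semidef_def
  proof
    fix v :: "nat \<Rightarrow> real"
    have "min ((\<beta> - 2*\<alpha>) * (1 - \<beta> + 2*\<alpha>)) ((\<beta> + 2*\<alpha>) * (1 - \<beta> - 2*\<alpha>)) = 0"
      using p1 eq by simp
    then show "quad_form n ?H v \<ge> 0" using low[of v] by simp
  qed
  have part3: "quad_form n ?H (\<lambda>_. 1) < 0" if gt: "\<beta> + 2 * \<alpha> > 1"
  proof -
    have "quad_form n ?H (\<lambda>_. 1) = real n * (\<beta> + 2 * \<alpha>) - real n * (\<beta> + 2 * \<alpha>)^2"
    proof -
      have c: "\<And>k. k < n \<Longrightarrow> (\<Sum>i<n. circA n \<alpha> \<beta> i k) = \<beta> + 2 * \<alpha>"
        using Av_formula[OF assms(1), of _ "\<lambda>_. 1"] by simp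
      show ?thesis unfolding quadH[OF assms(1)] by (simp add: c)
    qed
    also have "\<dots> = real n * ((\<beta> + 2 * \<alpha>) * (1 - (\<beta> + 2 * \<alpha>)))"
      by (simp add: algebra_simps power2_eq_square)
    also have "\<dots> < 0"
      using assms gt by (intro mult_pos_neg mult_pos_neg) auto
    finally show ?thesis .
  qed
  show ?thesis
  proof (intro conjI impI)
    show "pos_def n ?H" if "\<beta> + 2 * \<alpha> < 1" using part1 that by blast
    show "pos_semidef n ?H" if "\<beta> + 2 * \<alpha> = 1" using part2 that by blast
    assume gt: "\<beta> + 2 * \<alpha> > 1"
    show "\<not> pos_semidef n ?H"
    proof
      assume "pos_semidef n ?H"
      then have "quad_form n ?H (\<lambda>_. 1) \<ge> 0" unfolding pos_semidef_def by blast
      then show False using part3[OF gt] by linarith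
    qed
    show "\<not> pos_def n ?H"
    proof
      assume pd: "pos_def n ?H"
      have "\<exists>i<n. (\<lambda>_. 1::real) i \<noteq> 0" using assms(1) by (intro exI[of _ 0]) auto
      moreover have "(\<exists>i<n. (\<lambda>_. 1::real) i \<noteq> 0) \<longrightarrow> quad_form n ?H (\<lambda>_. 1) > 0"
        using pd unfolding pos_def_def by (rule spec)
      ultimately have "quad_form n ?H (\<lambda>_. 1) > 0" by (rule mp[rotated])
      then show False using part3[OF gt] by linarith
    qed
  qed
qed

end
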